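(* Let $S,T\subseteq\mathbb{Z}_{>0}$ be finite with $T\preceq S$, and let $x$ be such that $|T_{<x}|=|S_{\le x}|$. Then $(T\triangleleft S)(j)=T(j)$ for every $j\le|T_{<x}|$.
   Context: For a finite set $S\subseteq\mathbb{Z}_{>0}$, $S(i)$ denotes its $i$th smallest element, $S_{<x}=\{s\in S:s<x\}$, $S_{\le x}=\{s\in S:s\le x\}$. $T\preceq S$ means $|T|\ge|S|$ and $T(i)<S(i)$ for all $i\in[|S|]$. For finite $S,T$, $T\triangleleft S$ is computed by going through $S$ from largest to smallest; each $s$ picks the largest element of $T$ less than $s$ not yet picked (if one exists); $T\triangleleft S$ is the set of picked elements. *)

theory Defs
  imports Main
begin

text \<open>S(i): the i-th smallest element of a finite set S (1-indexed).\<close>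
definition nth_el :: "nat set \<Rightarrow> nat \<Rightarrow> nat" where
  "nth_el S i = sorted_list_of_set S ! (i - 1)"

definition prec :: "nat set \<Rightarrow> nat set \<Rightarrow> bool" where
  "prec T S \<longleftrightarrow> card T \<ge> card S \<and> (\<forall>i\<in>{1..card S}. nth_el T i < nth_el S i)"

text \<open>The second argument is the set of not-yet-picked elements of T.\<close>
fun pick :: "nat list \<Rightarrow> nat set \<Rightarrow> nat set" where
  "pick [] R = {}"
| "pick (s # ss) R =
     (if {t \<in> R. t < s} = {} then pick ss R
      else insert (Max {t \<in> R. t < s}) (pick ss (R - {Max {t \<in> R. t < s}})))"

definition tri :: "nat set \<Rightarrow> nat set \<Rightarrow> nat set" where
  "tri T S = pick (rev (sorted_list_of_set S)) T"

end

theory Submission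
  imports Defs
begin

definition invp :: "nat list \<Rightarrow> nat set \<Rightarrow> bool" where
  "invp L R \<longleftrightarrow> (\<forall>s\<in>set L. card {s'\<in>set L. s' \<le> s} \<le> card {r\<in>R. r < s})"

lemma fin_below: "finite {t \<in> (R::nat set). t < s}"
  by (rule finite_subset[of _ "{..<s}"]) auto

lemma pick_sub: "pick L R \<subseteq> R"
proof (induction L arbitrary: R)
  case Nil then show ?case by simp
next
  case (Cons s ss)
  have "{t \<in> R. t < s} \<noteq> {} \<Longrightarrow> Max {t \<in> R. t < s} \<in> R"
    using Max_in[OF fin_below] by blast
  then show ?case using Cons[of R] Cons[of "R - {Max {t \<in> R. t < s}}"] by auto
qed

lemma pick_below: "\<forall>s\<in>set L. s \<le> c \<Longrightarrow> pick L R \<subseteq> {r. r < c}"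
proof (induction L arbitrary: R)
  case Nil then show ?case by simp
next
  case (Cons s ss)
  show ?case
  proof (cases "{t \<in> R. t < s} = {}")
    case True then show ?thesis using Cons by simp
  next
    case False
    have "finite {t \<in> R. t < s}" by simp
    then have "Max {t \<in> R. t < s} < s" using False Max_in by blast
    then show ?thesis using Cons False by auto
  qed
qed

lemma pick_append: "pick (L1 @ L2) R = pick L1 R \<union> pick L2 (R - pick L1 R)"
proof (induction L1 arbitrary: R)
  case Nil then show ?case by simp
next
  case (Cons s ss)
  show ?case
  proof (cases "{t \<in> R. t < s} = {}")
    case True then show ?thesis using Cons by simp
  next
    case False
    let ?m = "Max {t \<in> R. t < s}"
    have e1: "pick (s # ss) R = insert ?m (pick ss (R - {?m}))" using False by (simp only: pick.simps if_False)
    have e2: "pick ((s # ss) @ L2) R = insert ?m (pick (ss @ L2) (R - {?m}))" using False by (simp only: append_Cons pick.simps if_False)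
    have "R - {?m} - pick ss (R - {?m}) = R - insert ?m (pick ss (R - {?m}))" by auto
    then show ?thesis unfolding e1 e2 Cons.IH by auto
  qed
qed

lemma inv_step:
  assumes "finite R" "sorted_wrt (>) (s # ss)" "invp (s # ss) R"
  shows "{t \<in> R. t < s} \<noteq> {}" "invp ss (R - {Max {t \<in> R. t < s}})"
proof -
  have fin: "finite {t \<in> R. t < s}" using assms(1) by simp
  have "{s'\<in>set (s#ss). s' \<le> s} \<noteq> {}" by auto
  then have "card {s'\<in>set (s#ss). s' \<le> s} > 0" by (simp add: card_gt_0_iff)
  then have c1: "card {t \<in> R. t < s} > 0" using assms(3) unfolding invp_def
    by (meson dual_order.strict_trans1 list.set_intros(1))
  then show ne: "{t \<in> R. t < s} \<noteq> {}" by (metis card.empty less_irrefl)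
  let ?m = "Max {t \<in> R. t < s}"
  have mR: "?m \<in> R" "?m < s" using Max_in[OF fin ne] by auto
  have mmax: "\<And>t. t \<in> R \<Longrightarrow> t < s \<Longrightarrow> t \<le> ?m" using fin by auto
  show "invp ss (R - {?m})"
    unfolding invp_def
  proof
    fix s' assume s': "s' \<in> set ss"
    have lt: "s' < s" using assms(2) s' by auto
    have sn: "s \<notin> set ss" using assms(2) by auto
    define c where "c = card {s''\<in>set ss. s'' \<le> s'}"
    have eqc: "{s''\<in>set (s#ss). s'' \<le> s'} = {s''\<in>set ss. s'' \<le> s'}" using lt by auto
    have h1: "c \<le> card {r\<in>R. r < s'}"
      using assms(3) s' eqc unfolding invp_def c_def by auto
    show "card {s''\<in>set ss. s'' \<le> s'} \<le> card {r\<in>R - {?m}. r < s'}"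
    proof (cases "?m < s'")
      case False
      then have "{r\<in>R - {?m}. r < s'} = {r\<in>R. r < s'}" by auto
      then show ?thesis using h1 c_def by simp
    next
      case True
      have eq: "{r\<in>R. r < s'} = {t \<in> R. t < s}"
      proof -
        { fix t assume "t \<in> R" "t < s" then have "t < s'" using mmax[of t] True by linarith }
        then show ?thesis using lt by auto
      qed
      have "insert s {s''\<in>set ss. s'' \<le> s'} \<subseteq> {s''\<in>set (s#ss). s'' \<le> s}" using lt by auto
      then have "card (insert s {s''\<in>set ss. s'' \<le> s'}) \<le> card {s''\<in>set (s#ss). s'' \<le> s}"
        by (intro card_mono) auto
      moreover have "card (insert s {s''\<in>set ss. s'' \<le> s'}) = c + 1" using sn c_def by simp
      moreover have "card {s''\<in>set (s#ss). s'' \<le> s} \<le> card {t \<in> R. t < s}"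
        using assms(3) unfolding invp_def by auto
      ultimately have "c + 1 \<le> card {r\<in>R. r < s'}" using eq by simp
      moreover have "{r\<in>R - {?m}. r < s'} = {r\<in>R. r < s'} - {?m}" by auto
      moreover have "?m \<in> {r\<in>R. r < s'}" using True mR by auto
      ultimately show ?thesis using c_def assms(1) by simp
    qed
  qed
qed

lemma pick_card:
  "finite R \<Longrightarrow> sorted_wrt (>) L \<Longrightarrow> invp L R \<Longrightarrow> card (pick L R) = length L"
proof (induction L arbitrary: R)
  case Nil then show ?case by simp
next
  case (Cons s ss)
  note st = inv_step[OF Cons.prems]
  let ?m = "Max {t \<in> R. t < s}"
  have "card (pick ss (R - {?m})) = length ss"
    using Cons st by simp
  moreover have "?m \<notin> pick ss (R - {?m})" using pick_sub by blast
  moreover have "finite (pick ss (R - {?m}))"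
    using pick_sub Cons.prems(1) by (meson finite_Diff finite_subset)
  moreover have "pick (s # ss) R = insert ?m (pick ss (R - {?m}))" using st(1) by (simp only: pick.simps if_False)
  ultimately show ?case by simp
qed

lemma pick_inv_append:
  "finite R \<Longrightarrow> sorted_wrt (>) (L1 @ L2) \<Longrightarrow> invp (L1 @ L2) R \<Longrightarrow> invp L2 (R - pick L1 R)"
proof (induction L1 arbitrary: R)
  case Nil then show ?case by simp
next
  case (Cons s ss)
  note st = inv_step[of R s "ss @ L2"]
  let ?m = "Max {t \<in> R. t < s}"
  have "invp L2 (R - {?m} - pick ss (R - {?m}))"
    using Cons st by simp
  moreover have "R - {?m} - pick ss (R - {?m}) = R - pick (s # ss) R"
    using st Cons.prems by auto
  ultimately show ?case by simp
qed

lemma sorted_split: "sorted xs \<Longrightarrow> xs = filter (\<lambda>s. s \<le> (x::nat)) xs @ filter (\<lambda>s. \<not> s \<le> x) xs"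
proof (induction xs)
  case Nil then show ?case by simp
next
  case (Cons a xs)
  show ?case
  proof (cases "a \<le> x")
    case True then show ?thesis using Cons by simp
  next
    case False
    then have "\<forall>y\<in>set xs. \<not> y \<le> x" using Cons.prems by auto
    then have "filter (\<lambda>s. s \<le> x) xs = []" "filter (\<lambda>s. \<not> s \<le> x) xs = xs" by auto
    then show ?thesis using False by simp
  qed
qed

lemma sorted_split_lt: "sorted xs \<Longrightarrow> xs = filter (\<lambda>s. s < (x::nat)) xs @ filter (\<lambda>s. \<not> s < x) xs"
proof (induction xs)
  case Nil then show ?case by simp
next
  case (Cons a xs)
  show ?case
  proof (cases "a < x")
    case True then show ?thesis using Cons by simp
  next
    case False
    then have "\<forall>y\<in>set xs. \<not> y < x" using Cons.prems by auto
    then have "filter (\<lambda>s. s < x) xs = []" "filter (\<lambda>s. \<not> s < x) xs = xs" by auto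
    then show ?thesis using False by simp
  qed
qed

lemma filter_sl: "finite A \<Longrightarrow> filter P (sorted_list_of_set A) = sorted_list_of_set {a\<in>A. P a}"
proof -
  assume f: "finite A"
  have 1: "sorted_wrt (<) (filter P (sorted_list_of_set A))"
    using sorted_wrt_filter strict_sorted_list_of_set by blast
  have 2: "set (filter P (sorted_list_of_set A)) = {a\<in>A. P a}" using f by auto
  have "distinct (filter P (sorted_list_of_set A))" by simp
  then have 3: "length (filter P (sorted_list_of_set A)) = card {a\<in>A. P a}"
    using 2 distinct_card by fastforce
  show ?thesis using sorted_list_of_set_unique[of "{a\<in>A. P a}" "filter P (sorted_list_of_set A)"] 1 2 3 f
    by simp
qed

lemma nth_prefix:
  assumes "finite A" "finite B" "{a\<in>A. a < x} = {b\<in>B. b < x}" "1 \<le> j" "j \<le> card {a\<in>A. a < (x::nat)}"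
  shows "nth_el A j = nth_el B j"
proof -
  let ?C = "{a\<in>A. a < x}"
  have "sorted_list_of_set A = sorted_list_of_set ?C @ filter (\<lambda>s. \<not> s < x) (sorted_list_of_set A)"
    using sorted_split_lt[of "sorted_list_of_set A" x] filter_sl[OF assms(1), of "\<lambda>s. s < x"] by simp
  moreover have "sorted_list_of_set B = sorted_list_of_set ?C @ filter (\<lambda>s. \<not> s < x) (sorted_list_of_set B)"
    using sorted_split_lt[of "sorted_list_of_set B" x] filter_sl[OF assms(2), of "\<lambda>s. s < x"] assms(3) by simp
  moreover have "j - 1 < length (sorted_list_of_set ?C)" using assms by simp
  ultimately show ?thesis unfolding nth_el_def by (metis nth_append)
qed

lemma init_inv:
  assumes fS: "finite S" and fT: "finite T" and pr: "prec T S" and sS: "s \<in> S"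
  shows "card {s'\<in>S. s' \<le> s} \<le> card {t\<in>T. t < (s::nat)}"
proof -
  let ?xs = "sorted_list_of_set S" and ?ys = "sorted_list_of_set T"
  define F where "F = filter (\<lambda>a. a \<le> s) ?xs"
  define j where "j = card {s'\<in>S. s' \<le> s}"
  have lenF: "length F = j" unfolding F_def j_def filter_sl[OF fS] by simp
  have "{s'\<in>S. s' \<le> s} \<noteq> {}" using sS by auto
  then have "card {s'\<in>S. s' \<le> s} > 0" using fS by (simp add: card_gt_0_iff)
  then have j1: "1 \<le> j" unfolding j_def by simp
  have jS: "j \<le> card S" unfolding j_def using fS by (intro card_mono) auto
  have jT: "j \<le> card T" using jS pr unfolding prec_def by simp
  have split: "?xs = F @ filter (\<lambda>a. \<not> a \<le> s) ?xs" unfolding F_def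
    by (rule sorted_split) simp
  have jl: "j - 1 < length F" using lenF j1 by simp
  have "?xs ! (j-1) = (F @ filter (\<lambda>a. \<not> a \<le> s) ?xs) ! (j-1)"
    using arg_cong[OF split, of "\<lambda>l. l ! (j-1)"] .
  also have "\<dots> = F ! (j-1)" using jl by (simp add: nth_append)
  finally have "?xs ! (j-1) = F ! (j-1)" .
  moreover have "F ! (j-1) \<in> set F" using lenF j1 by simp
  ultimately have xle: "?xs ! (j-1) \<le> s" unfolding F_def by simp
  have "nth_el T j < nth_el S j" using pr j1 jS unfolding prec_def by auto
  then have ylt: "?ys ! (j-1) < s" using xle unfolding nth_el_def by simp
  have "set (take j ?ys) \<subseteq> {t\<in>T. t < s}"
  proof
    fix t assume "t \<in> set (take j ?ys)"
    then obtain i where i: "i < length (take j ?ys)" "t = take j ?ys ! i" by (metis in_set_conv_nth)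
    then have ij: "i < j" "i < length ?ys" by auto
    then have "t = ?ys ! i" using i by simp
    moreover have "?ys ! i \<le> ?ys ! (j-1)"
      using ij jT fT by (intro sorted_nth_mono) auto
    moreover have "?ys ! i \<in> T" using ij fT by (metis nth_mem set_sorted_list_of_set)
    ultimately show "t \<in> {t\<in>T. t < s}" using ylt by auto
  qed
  moreover have "card (set (take j ?ys)) = j"
    using jT fT by (simp add: distinct_card)
  ultimately show ?thesis unfolding j_def[symmetric]
    using card_mono[of "{t\<in>T. t < s}" "set (take j ?ys)"] fT by simp
qed

theorem lemma4p9:
  fixes S T :: "nat set" and x :: nat
  assumes "finite S" and "finite T"
    and "0 \<notin> S" and "0 \<notin> T"
    and "prec T S"
    and "card {t \<in> T. t < x} = card {s \<in> S. s \<le> x}"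
  shows "\<forall>j. 1 \<le> j \<and> j \<le> card {t \<in> T. t < x} \<longrightarrow> nth_el (tri T S) j = nth_el T j"
proof -
  let ?xs = "sorted_list_of_set S"
  define L1 where "L1 = rev (filter (\<lambda>a. \<not> a \<le> x) ?xs)"
  define L2 where "L2 = rev (filter (\<lambda>a. a \<le> x) ?xs)"
  have split: "rev ?xs = L1 @ L2" unfolding L1_def L2_def
    by (metis rev_append sorted_split sorted_sorted_list_of_set)
  have srt: "sorted_wrt (>) (rev ?xs)"
    by (simp add: sorted_wrt_rev)
  have inv0: "invp (rev ?xs) T" unfolding invp_def using init_inv[OF assms(1,2,5)] assms(1) by simp
  define R' where "R' = T - pick L1 T"
  have inv2: "invp L2 R'" unfolding R'_def
    using pick_inv_append[of T L1 L2] split srt inv0 assms(2) by simp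
  have srt2: "sorted_wrt (>) L2" using srt split by (simp add: sorted_wrt_append)
  have fR: "finite R'" unfolding R'_def using assms(2) by simp
  have c2: "card (pick L2 R') = card {s \<in> S. s \<le> x}"
    using pick_card[OF fR srt2 inv2] unfolding L2_def using filter_sl[OF assms(1)] by simp
  have sub2: "pick L2 R' \<subseteq> {t \<in> T. t < x}"
    using pick_sub[of L2 R'] pick_below[of L2 x R'] unfolding R'_def L2_def by auto
  have eq2: "pick L2 R' = {t \<in> T. t < x}"
    using card_subset_eq[OF _ sub2] c2 assms(2,6) by simp
  have tri: "tri T S = pick L1 T \<union> pick L2 R'"
    unfolding tri_def split pick_append R'_def by simp
  have triT: "tri T S \<subseteq> T" unfolding tri_def using pick_sub by blast
  have "{a \<in> tri T S. a < x} = {t \<in> T. t < x}" using triT tri eq2 by blast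
  moreover have "finite (tri T S)" using triT assms(2) finite_subset by blast
  ultimately show ?thesis using nth_prefix[of "tri T S" T x] assms(2) by auto
qed

end
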